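(* Let $n\in\{1,2,3\}$, let $\Omega\subset\mathbb{R}^n$ be a bounded domain with smooth boundary, $T>0$, $T_0\in[0,T[$, and let $D\subset\overline\Omega\times[T_0,T]$ be Lebesgue measurable with $\rho$ essentially bounded on $D$. Assume there exist positive numbers $\delta<T-T_0$, $C_1$, $C_2$ and $p\in[0,\infty[$ such that $|D(s)|\ge C_1s^p$ for almost all $s\in[0,\delta]$, where $D(s)=D\cap(\mathbb{R}^n\times\{T_0+s\})$ and $|\cdot|$ is $n$-dimensional Lebesgue measure, and either $\rho\ge C_2$ a.e. on $D\cap(\mathbb{R}^n\times[T_0,T_0+\delta])$ or $-\rho\ge C_2$ a.e. there. Let $\omega\in S^{n-1}$. Then there exist constants $K_1,K_2,K_3,K_4$ with $K_1,K_3>0$ such that, for all sufficiently large $\tau$, $$K_1e^{\sqrt{\tau}K_2}\tau^{-(p+1)}\le e^{\tau T_0}\Big|\int_{D\cap(\mathbb{R}^n\times[T_0,T_0+\delta])}\rho(x,t)e^{\sqrt{\tau}\,x\cdot\omega-\tau t}\,dx\,dt\Big|\le K_3e^{\sqrt{\tau}K_4}.$$ *)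

theory Defs
  imports "HOL-Analysis.Analysis"
begin

fun Ck :: "nat \<Rightarrow> ('a::euclidean_space \<Rightarrow> real) \<Rightarrow> bool" where
  "Ck 0 f = continuous_on UNIV f"
| "Ck (Suc k) f = (f differentiable_on UNIV \<and>
      (\<forall>i\<in>Basis. Ck k (\<lambda>x. frechet_derivative f (at x) i)))"

definition smooth_fun :: "('a::euclidean_space \<Rightarrow> real) \<Rightarrow> bool" where
  "smooth_fun f \<longleftrightarrow> (\<forall>k. Ck k f)"

definition smooth_boundary :: "'a::euclidean_space set \<Rightarrow> bool" where
  "smooth_boundary \<Omega> \<longleftrightarrow> (\<exists>\<phi>. smooth_fun \<phi> \<and> \<Omega> = {x. \<phi> x < 0} \<and>
      (\<forall>x. \<phi> x = 0 \<longrightarrow> frechet_derivative \<phi> (at x) \<noteq> (\<lambda>_. 0)))"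

definition bounded_smooth_domain :: "'a::euclidean_space set \<Rightarrow> bool" where
  "bounded_smooth_domain \<Omega> \<longleftrightarrow> open \<Omega> \<and> connected \<Omega> \<and> \<Omega> \<noteq> {} \<and> bounded \<Omega> \<and> smooth_boundary \<Omega>"

end

theory Submission
  imports Defs
begin

lemma slice_lower:
  fixes E :: "('a::euclidean_space \<times> real) set"
  assumes E: "E \<in> sets lebesgue" and c: "0 \<le> c" and ab: "a \<le> b"
    and ae: "AE t in lborel. t \<in> {a..b} \<longrightarrow> c \<le> measure lebesgue {x. (x, t) \<in> E}"
  shows "ennreal (c * (b - a)) \<le> emeasure lebesgue E"
proof -
  obtain S where S: "E \<subseteq> S" "S \<in> sets lborel" "emeasure lebesgue E = emeasure lborel S"
    using completion_upper[of E lborel] E by metis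
  have Sp: "S \<in> sets (lborel \<Otimes>\<^sub>M lborel)" using S(2) lborel_prod[where 'a='a and 'b=real] by (simp only:)
  have "emeasure lborel S = emeasure (lborel \<Otimes>\<^sub>M (lborel::real measure)) S"
    using lborel_prod[where 'a='a and 'b=real] by (simp only:)
  also have "\<dots> = (\<integral>\<^sup>+t. emeasure lborel ((\<lambda>x. (x, t)) -` S) \<partial>lborel)"
    by (rule lborel_pair.emeasure_pair_measure_alt2[OF Sp])
  also have "\<dots> \<ge> (\<integral>\<^sup>+t. ennreal c * indicator {a..b} t \<partial>lborel)"
  proof (rule nn_integral_mono_AE)
    show "AE t in lborel. ennreal c * indicator {a..b} t \<le> emeasure lborel ((\<lambda>x. (x, t)) -` S)"
      using ae
    proof eventually_elim
      case (elim t)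
      show ?case
      proof (cases "t \<in> {a..b}")
        case True
        have "(\<lambda>x::'a. (x, t)) \<in> borel_measurable borel"
          by (intro borel_measurable_continuous_onI continuous_intros)
        then have sl: "(\<lambda>x. (x, t)) -` S \<in> sets lborel"
          using S(2) measurable_sets[of "\<lambda>x::'a. (x, t)" borel borel S] by simp
        have "ennreal c \<le> ennreal (measure lebesgue {x. (x, t) \<in> E})"
          using elim True by simp
        also have "\<dots> \<le> emeasure lebesgue {x. (x, t) \<in> E}"
          by (simp add: measure_def ennreal_enn2real_if)
        also have "\<dots> \<le> emeasure lebesgue ((\<lambda>x. (x, t)) -` S)"
          by (rule emeasure_mono) (use S(1) sl in auto)
        also have "\<dots> = emeasure lborel ((\<lambda>x. (x, t)) -` S)"
          using sl by (simp add: emeasure_completion)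
        finally show ?thesis using True by simp
      qed simp
    qed
  qed
  also have "(\<integral>\<^sup>+t. ennreal c * indicator {a..b} t \<partial>lborel) = ennreal (c * (b - a))"
    using ab c by (simp add: nn_integral_cmult_indicator ennreal_mult)
  finally show ?thesis using S(3) by simp
qed

lemma integ_bound:
  fixes E :: "('a::euclidean_space \<times> real) set" and \<rho> :: "'a \<times> real \<Rightarrow> real"
  assumes E: "E \<in> sets lebesgue" and Eb: "E \<subseteq> cball 0 R \<times> {T0..T1}"
    and rho: "\<rho> \<in> borel_measurable (lebesgue_on E)"
    and bdd: "AE z in lebesgue_on E. \<bar>\<rho> z\<bar> \<le> M"
    and tau: "\<tau> \<ge> 0" and omega: "norm \<omega> = 1"
  shows "integrable (lebesgue_on E) (\<lambda>z. \<rho> z * exp (sqrt \<tau> * (fst z \<bullet> \<omega>) - \<tau> * snd z))"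
    and "exp (\<tau> * T0) * \<bar>LINT z | lebesgue_on E. \<rho> z * exp (sqrt \<tau> * (fst z \<bullet> \<omega>) - \<tau> * snd z)\<bar>
          \<le> M * measure lebesgue E * exp (sqrt \<tau> * R)"
proof -
  have "bounded (cball (0::'a) R \<times> {T0..T1})" by (intro bounded_Times) auto
  then have El: "E \<in> lmeasurable" using E Eb bounded_subset bounded_set_imp_lmeasurable by blast
  interpret finite_measure "lebesgue_on E" using El by (rule finite_measure_lebesgue_on)
  have ec: "continuous_on UNIV (\<lambda>z::'a\<times>real. exp (sqrt \<tau> * (fst z \<bullet> \<omega>) - \<tau> * snd z))"
    by (intro continuous_intros)
  have "(\<lambda>z::'a\<times>real. exp (sqrt \<tau> * (fst z \<bullet> \<omega>) - \<tau> * snd z)) \<in> borel_measurable lebesgue"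
    using borel_measurable_continuous_onI[OF ec] by (simp add: measurable_completion)
  then have meas: "(\<lambda>z. \<rho> z * exp (sqrt \<tau> * (fst z \<bullet> \<omega>) - \<tau> * snd z)) \<in> borel_measurable (lebesgue_on E)"
    by (intro borel_measurable_times[OF rho] measurable_restrict_space1)
  have pt: "exp (sqrt \<tau> * (fst z \<bullet> \<omega>) - \<tau> * snd z) \<le> exp (sqrt \<tau> * R - \<tau> * T0)" if "z \<in> E" for z
  proof -
    have "fst z \<bullet> \<omega> \<le> norm (fst z) * norm \<omega>" by (meson Cauchy_Schwarz_ineq2 abs_le_D1)
    also have "\<dots> \<le> R" using Eb that omega by (auto simp: mem_cball_0)
    finally have "sqrt \<tau> * (fst z \<bullet> \<omega>) \<le> sqrt \<tau> * R" using tau by (simp add: mult_left_mono)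
    moreover have "\<tau> * T0 \<le> \<tau> * snd z" using Eb that tau by (auto intro!: mult_left_mono)
    ultimately show ?thesis by simp
  qed
  have ae: "AE z in lebesgue_on E. \<bar>\<rho> z * exp (sqrt \<tau> * (fst z \<bullet> \<omega>) - \<tau> * snd z)\<bar> \<le> M * exp (sqrt \<tau> * R - \<tau> * T0)"
    using bdd AE_space
  proof eventually_elim
    case (elim z)
    then have z: "z \<in> E" by (simp add: space_restrict_space)
    have "\<bar>\<rho> z * exp (sqrt \<tau> * (fst z \<bullet> \<omega>) - \<tau> * snd z)\<bar> = \<bar>\<rho> z\<bar> * exp (sqrt \<tau> * (fst z \<bullet> \<omega>) - \<tau> * snd z)"
      by (simp add: abs_mult)
    also have "\<dots> \<le> M * exp (sqrt \<tau> * R - \<tau> * T0)"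
      using elim pt[OF z] by (intro mult_mono) auto
    finally show ?case .
  qed
  show int: "integrable (lebesgue_on E) (\<lambda>z. \<rho> z * exp (sqrt \<tau> * (fst z \<bullet> \<omega>) - \<tau> * snd z))"
    using ae meas by (intro integrable_const_bound[where B="M * exp (sqrt \<tau> * R - \<tau> * T0)"]) auto
  have "\<bar>LINT z | lebesgue_on E. \<rho> z * exp (sqrt \<tau> * (fst z \<bullet> \<omega>) - \<tau> * snd z)\<bar>
      \<le> (LINT z | lebesgue_on E. \<bar>\<rho> z * exp (sqrt \<tau> * (fst z \<bullet> \<omega>) - \<tau> * snd z)\<bar>)"
    by (rule integral_abs_bound)
  also have "\<dots> \<le> (LINT z | lebesgue_on E. M * exp (sqrt \<tau> * R - \<tau> * T0))"
    using ae int by (intro integral_mono_AE) auto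
  also have "\<dots> = measure lebesgue E * (M * exp (sqrt \<tau> * R - \<tau> * T0))"
    using E by (simp add: space_restrict_space measure_restrict_space)
  finally have "\<bar>LINT z | lebesgue_on E. \<rho> z * exp (sqrt \<tau> * (fst z \<bullet> \<omega>) - \<tau> * snd z)\<bar>
      \<le> measure lebesgue E * (M * exp (sqrt \<tau> * R - \<tau> * T0))" .
  then have "exp (\<tau> * T0) * \<bar>LINT z | lebesgue_on E. \<rho> z * exp (sqrt \<tau> * (fst z \<bullet> \<omega>) - \<tau> * snd z)\<bar>
      \<le> exp (\<tau> * T0) * (measure lebesgue E * (M * exp (sqrt \<tau> * R - \<tau> * T0)))"
    by (simp add: mult_left_mono)
  also have "\<dots> = M * measure lebesgue E * exp (sqrt \<tau> * R)"
    by (simp add: exp_diff)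
  finally show "exp (\<tau> * T0) * \<bar>LINT z | lebesgue_on E. \<rho> z * exp (sqrt \<tau> * (fst z \<bullet> \<omega>) - \<tau> * snd z)\<bar>
          \<le> M * measure lebesgue E * exp (sqrt \<tau> * R)" .
qed

lemma ae_shift:
  fixes T0 :: real
  assumes "AE s in lborel. P s"
  shows "AE t in lborel. P (t - T0)"
proof -
  from assms obtain N where N: "{x \<in> space lborel. \<not> P x} \<subseteq> N" "emeasure lborel N = 0" "N \<in> sets lborel"
    by (rule AE_E)
  have "AE s in lborel. s \<notin> N" using N by (intro AE_not_in) auto
  have m: "{x \<in> space borel. x - T0 \<notin> N} \<in> sets borel"
  proof -
    have "(\<lambda>x::real. x - T0) \<in> borel_measurable borel" by simp
    then have "(\<lambda>x::real. x - T0) -` (- N) \<inter> space borel \<in> sets borel"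
      using measurable_sets[OF \<open>(\<lambda>x::real. x - T0) \<in> borel_measurable borel\<close>, of "- N"] N(3) by auto
    moreover have "(\<lambda>x::real. x - T0) -` (- N) \<inter> space borel = {x \<in> space borel. x - T0 \<notin> N}" by auto
    ultimately show ?thesis by simp
  qed
  have "AE t in distr lborel borel ((+) T0). t - T0 \<notin> N"
    by (subst AE_distr_iff[OF _ m]) (use \<open>AE s in lborel. s \<notin> N\<close> in auto)
  then have "AE t in lborel. t - T0 \<notin> N" by (simp only: lborel_distr_plus)
  then show ?thesis
    by eventually_elim (use N(1) in auto)
qed

lemma lower_fixed:
  fixes E :: "('a::euclidean_space \<times> real) set" and \<rho> :: "'a \<times> real \<Rightarrow> real"
  assumes E: "E \<in> sets lebesgue" and Eb: "E \<subseteq> cball 0 R \<times> {T0..T1}"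
    and rho: "\<rho> \<in> borel_measurable (lebesgue_on E)"
    and bdd: "AE z in lebesgue_on E. \<bar>\<rho> z\<bar> \<le> M"
    and pos: "AE z in lebesgue_on E. C2 \<le> \<rho> z"
    and C: "0 < C1" "0 < C2" and p: "0 \<le> p"
    and sl: "AE s in lborel. s \<in> {0..\<delta>} \<longrightarrow> C1 * s powr p \<le> measure lebesgue {x. (x, T0 + s) \<in> E}"
    and tau: "\<tau> > 0" "1 / \<tau> \<le> \<delta>" and omega: "norm \<omega> = 1"
  shows "C1 * C2 * exp (-1) * (1/2) powr (p + 1) * exp (sqrt \<tau> * (-R)) * \<tau> powr (-(p + 1))
     \<le> exp (\<tau> * T0) * (LINT z | lebesgue_on E. \<rho> z * exp (sqrt \<tau> * (fst z \<bullet> \<omega>) - \<tau> * snd z))"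
proof -
  define a where "a = 1 / (2 * \<tau>)"
  define b where "b = 1 / \<tau>"
  have ab: "0 < a" "a \<le> b" "b \<le> \<delta>" "b - a = a" using tau by (auto simp: a_def b_def field_simps)
  define F where "F = E \<inter> (UNIV \<times> {T0 + a..T0 + b})"
  have "closed (UNIV \<times> {T0 + a..T0 + b})" by (intro closed_Times) auto
  then have "UNIV \<times> {T0 + a..T0 + b} \<in> sets lebesgue"
    using borel_closed by (intro sets_completionI_sets) auto
  then have Fm: "F \<in> sets lebesgue" unfolding F_def
    using E by (intro sets.Int) auto
  have "bounded (cball (0::'a) R \<times> {T0..T1})" by (intro bounded_Times) auto
  then have Fl: "F \<in> lmeasurable" using Fm Eb bounded_subset bounded_set_imp_lmeasurable
    unfolding F_def by blast
  have "AE t in lborel. (t - T0) \<in> {0..\<delta>} \<longrightarrow> C1 * (t - T0) powr p \<le> measure lebesgue {x. (x, T0 + (t - T0)) \<in> E}"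
    by (rule ae_shift[OF sl])
  then have "AE t in lborel. t \<in> {T0 + a..T0 + b} \<longrightarrow> C1 * a powr p \<le> measure lebesgue {x. (x, t) \<in> F}"
  proof eventually_elim
    case (elim t)
    show ?case
    proof
      assume t: "t \<in> {T0 + a..T0 + b}"
      then have "t - T0 \<in> {0..\<delta>}" using ab by auto
      with elim have "C1 * (t - T0) powr p \<le> measure lebesgue {x. (x, t) \<in> E}" by simp
      moreover have "a powr p \<le> (t - T0) powr p" using t ab p by (intro powr_mono2) auto
      moreover have "{x. (x, t) \<in> F} = {x. (x, t) \<in> E}" using t by (auto simp: F_def)
      ultimately show "C1 * a powr p \<le> measure lebesgue {x. (x, t) \<in> F}"
        using C by (metis (no_types, lifting) mult_left_mono order_trans less_imp_le)
    qed
  qed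
  from slice_lower[OF Fm _ _ this] have "ennreal (C1 * a powr p * ((T0 + b) - (T0 + a))) \<le> emeasure lebesgue F"
    using C ab by auto
  then have mF: "C1 * a powr p * a \<le> measure lebesgue F"
    using Fl ab by (simp add: emeasure_eq_measure2 ennreal_le_iff)
  define c where "c = C2 * exp (- sqrt \<tau> * R - \<tau> * T0 - 1)"
  interpret finite_measure "lebesgue_on E" using E Eb \<open>bounded (cball (0::'a) R \<times> {T0..T1})\<close>
    by (intro finite_measure_lebesgue_on) (meson bounded_subset bounded_set_imp_lmeasurable)
  have int: "integrable (lebesgue_on E) (\<lambda>z. \<rho> z * exp (sqrt \<tau> * (fst z \<bullet> \<omega>) - \<tau> * snd z))"
    using tau by (intro integ_bound(1)[OF E Eb rho bdd _ omega]) auto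
  have intc: "integrable (lebesgue_on E) (\<lambda>z. c * indicator F z)"
  proof (rule integrable_const_bound[where B="\<bar>c\<bar>"])
    show "AE x in lebesgue_on E. norm (c * indicator F x) \<le> \<bar>c\<bar>"
      by (auto simp: indicator_def)
    have "indicator F \<in> borel_measurable lebesgue" using Fm by simp
    then show "(\<lambda>z. c * indicator F z) \<in> borel_measurable (lebesgue_on E)"
      by (intro borel_measurable_times measurable_restrict_space1) auto
  qed
  have "(LINT z | lebesgue_on E. c * indicator F z) \<le> (LINT z | lebesgue_on E. \<rho> z * exp (sqrt \<tau> * (fst z \<bullet> \<omega>) - \<tau> * snd z))"
  proof (rule integral_mono_AE[OF intc int])
    show "AE z in lebesgue_on E. c * indicator F z \<le> \<rho> z * exp (sqrt \<tau> * (fst z \<bullet> \<omega>) - \<tau> * snd z)"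
      using pos AE_space
    proof eventually_elim
      case (elim z)
      then have z: "z \<in> E" by (simp add: space_restrict_space)
      show ?case
      proof (cases "z \<in> F")
        case True
        have "- (fst z \<bullet> \<omega>) \<le> norm (fst z) * norm \<omega>" by (meson Cauchy_Schwarz_ineq2 abs_le_D2)
        also have "\<dots> \<le> R" using Eb z omega by (auto simp: mem_cball_0)
        finally have "- sqrt \<tau> * R \<le> sqrt \<tau> * (fst z \<bullet> \<omega>)" using tau
          by (metis minus_le_iff mult_left_mono mult_minus_left mult_minus_right real_sqrt_ge_zero less_imp_le)
        moreover have "\<tau> * snd z \<le> \<tau> * T0 + 1"
        proof -
          have "snd z \<le> T0 + 1 / \<tau>" using True by (auto simp: F_def b_def)
          then have "\<tau> * snd z \<le> \<tau> * (T0 + 1 / \<tau>)" using tau by (intro mult_left_mono) auto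
          then show ?thesis using tau by (simp add: algebra_simps)
        qed
        ultimately have "exp (- sqrt \<tau> * R - \<tau> * T0 - 1) \<le> exp (sqrt \<tau> * (fst z \<bullet> \<omega>) - \<tau> * snd z)"
          by simp
        then have "C2 * exp (- sqrt \<tau> * R - \<tau> * T0 - 1) \<le> \<rho> z * exp (sqrt \<tau> * (fst z \<bullet> \<omega>) - \<tau> * snd z)"
          using elim C by (intro mult_mono) auto
        then show ?thesis using True by (simp add: c_def)
      next
        case False
        then show ?thesis using elim C by (simp add: less_imp_le)
      qed
    qed
  qed
  moreover have "(LINT z | lebesgue_on E. c * indicator F z) = c * measure lebesgue F"
  proof -
    have "F \<inter> E = F" "F \<subseteq> E" by (auto simp: F_def)
    moreover have "measure (lebesgue_on E) F = measure lebesgue F"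
      using E \<open>F \<subseteq> E\<close> by (intro measure_restrict_space) auto
    ultimately show ?thesis using E by (simp add: space_restrict_space)
  qed
  ultimately have I: "c * measure lebesgue F \<le> (LINT z | lebesgue_on E. \<rho> z * exp (sqrt \<tau> * (fst z \<bullet> \<omega>) - \<tau> * snd z))"
    by linarith
  have cpos: "0 \<le> c" using C by (simp add: c_def)
  have "c * (C1 * a powr p * a) \<le> c * measure lebesgue F" using mF cpos by (rule mult_left_mono)
  then have "exp (\<tau> * T0) * (c * (C1 * a powr p * a)) \<le> exp (\<tau> * T0) * (LINT z | lebesgue_on E. \<rho> z * exp (sqrt \<tau> * (fst z \<bullet> \<omega>) - \<tau> * snd z))"
    using I by (intro mult_left_mono) auto
  moreover have "exp (\<tau> * T0) * (c * (C1 * a powr p * a)) = C1 * C2 * exp (-1) * (1/2) powr (p + 1) * exp (sqrt \<tau> * (-R)) * \<tau> powr (-(p + 1))"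
  proof -
    have "a powr p * a = a powr (p + 1)" using ab by (simp add: powr_add)
    also have "\<dots> = (1/2) powr (p + 1) * \<tau> powr (-(p + 1))"
    proof -
      have "a = (1/2) * (1/\<tau>)" by (simp add: a_def)
      then have "a powr (p + 1) = (1/2) powr (p + 1) * (1/\<tau>) powr (p + 1)"
        using tau by (simp only: powr_mult[of "1/2" "1/\<tau>"] divide_nonneg_nonneg less_imp_le)
      moreover have "(1/\<tau>) powr (p + 1) = \<tau> powr (-(p + 1))"
      proof -
        have "\<tau> powr (-(p + 1)) = 1 / \<tau> powr (p + 1)" by (rule powr_minus_divide)
        moreover have "(1/\<tau>) powr (p + 1) = 1 / \<tau> powr (p + 1)" using tau by (simp add: powr_divide)
        ultimately show ?thesis by simp
      qed
      ultimately show ?thesis by simp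
    qed
    finally have 1: "a powr p * a = (1/2) powr (p + 1) * \<tau> powr (-(p + 1))" .
    have 2: "exp (\<tau> * T0) * c = C2 * exp (-1) * exp (sqrt \<tau> * (-R))"
    proof -
      have "exp (\<tau> * T0) * exp (- sqrt \<tau> * R - \<tau> * T0 - 1) = exp (\<tau> * T0 + (- sqrt \<tau> * R - \<tau> * T0 - 1))"
        by (simp only: exp_add)
      also have "\<dots> = exp (-1 + sqrt \<tau> * (-R))" by (simp add: algebra_simps)
      also have "\<dots> = exp (-1) * exp (sqrt \<tau> * (-R))" by (simp only: exp_add)
      finally show ?thesis by (simp add: c_def)
    qed
    show ?thesis using 1 2 by (simp add: algebra_simps)
  qed
  ultimately show ?thesis by simp
qed

theorem lemma3p1:
  fixes \<Omega> :: "(real ^ 'n) set"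
    and D :: "((real ^ 'n) \<times> real) set"
    and \<rho> :: "(real ^ 'n) \<times> real \<Rightarrow> real"
    and T T0 \<delta> C1 C2 p :: real
    and \<omega> :: "real ^ 'n"
  assumes dim: "CARD('n) \<in> {1, 2, 3}"
    and dom: "bounded_smooth_domain \<Omega>"
    and T: "T > 0" and T0: "0 \<le> T0" "T0 < T"
    and Dsub: "D \<subseteq> closure \<Omega> \<times> {T0..T}"
    and Dmeas: "D \<in> sets lebesgue"
    and rho_meas: "\<rho> \<in> borel_measurable (lebesgue_on D)"
    and rho_bdd: "\<exists>M. AE z in lebesgue_on D. \<bar>\<rho> z\<bar> \<le> M"
    and delta: "0 < \<delta>" "\<delta> < T - T0"
    and C: "0 < C1" "0 < C2"
    and p: "0 \<le> p"
    and slices: "AE s in lebesgue_on {0..\<delta>}.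
                   measure lebesgue {x. (x, T0 + s) \<in> D} \<ge> C1 * s powr p"
    and sign: "(AE z in lebesgue_on (D \<inter> (UNIV \<times> {T0..T0+\<delta>})). \<rho> z \<ge> C2) \<or>
               (AE z in lebesgue_on (D \<inter> (UNIV \<times> {T0..T0+\<delta>})). - \<rho> z \<ge> C2)"
    and omega: "norm \<omega> = 1"
  shows "\<exists>K1 K2 K3 K4. K1 > 0 \<and> K3 > 0 \<and>
    (\<forall>\<^sub>F \<tau> in at_top.
      K1 * exp (sqrt \<tau> * K2) * \<tau> powr (-(p + 1))
        \<le> exp (\<tau> * T0) * \<bar>LINT z | lebesgue_on (D \<inter> (UNIV \<times> {T0..T0+\<delta>})).
               \<rho> z * exp (sqrt \<tau> * (fst z \<bullet> \<omega>) - \<tau> * snd z)\<bar> \<and>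
      exp (\<tau> * T0) * \<bar>LINT z | lebesgue_on (D \<inter> (UNIV \<times> {T0..T0+\<delta>})).
               \<rho> z * exp (sqrt \<tau> * (fst z \<bullet> \<omega>) - \<tau> * snd z)\<bar>
        \<le> K3 * exp (sqrt \<tau> * K4))"
proof -
  define E where "E = D \<inter> (UNIV \<times> {T0..T0+\<delta>})"
  have "bounded \<Omega>" using dom by (simp add: bounded_smooth_domain_def)
  then have "bounded (closure \<Omega>)" by (rule bounded_closure)
  then obtain R where R: "\<And>x. x \<in> closure \<Omega> \<Longrightarrow> norm x \<le> R" by (auto simp: bounded_iff)
  have Eb: "E \<subseteq> cball 0 R \<times> {T0..T0+\<delta>}" using Dsub R by (auto simp: E_def mem_cball_0)
  have "closed (UNIV \<times> {T0..T0+\<delta>} :: ((real ^ 'n) \<times> real) set)" by (intro closed_Times) auto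
  then have "UNIV \<times> {T0..T0+\<delta>} \<in> sets (lebesgue :: ((real ^ 'n) \<times> real) measure)"
    using borel_closed by (intro sets_completionI_sets) auto
  then have Em: "E \<in> sets lebesgue" unfolding E_def using Dmeas by (intro sets.Int) auto
  have rhoE: "\<rho> \<in> borel_measurable (lebesgue_on E)"
    by (rule measurable_restrict_mono[OF rho_meas]) (auto simp: E_def)
  obtain M where M: "AE z in lebesgue_on D. \<bar>\<rho> z\<bar> \<le> M" using rho_bdd by blast
  have bddE: "AE z in lebesgue_on E. \<bar>\<rho> z\<bar> \<le> M"
  proof -
    have "AE z in lebesgue. z \<in> D \<longrightarrow> \<bar>\<rho> z\<bar> \<le> M" using M Dmeas by (simp add: AE_restrict_space_iff)
    then have "AE z in lebesgue. z \<in> E \<longrightarrow> \<bar>\<rho> z\<bar> \<le> M" by eventually_elim (auto simp: E_def)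
    then show ?thesis using Em by (simp add: AE_restrict_space_iff)
  qed
  have slE: "AE s in lborel. s \<in> {0..\<delta>} \<longrightarrow> C1 * s powr p \<le> measure lebesgue {x. (x, T0 + s) \<in> E}"
  proof -
    have "AE s in lebesgue. s \<in> {0..\<delta>} \<longrightarrow> C1 * s powr p \<le> measure lebesgue {x. (x, T0 + s) \<in> D}"
      using slices by (simp add: AE_restrict_space_iff)
    then have "AE s in lborel. s \<in> {0..\<delta>} \<longrightarrow> C1 * s powr p \<le> measure lebesgue {x. (x, T0 + s) \<in> D}"
      by (simp add: AE_completion_iff)
    then show ?thesis
    proof eventually_elim
      case (elim s)
      show ?case
      proof
        assume s: "s \<in> {0..\<delta>}"
        then have "{x. (x, T0 + s) \<in> E} = {x. (x, T0 + s) \<in> D}" by (auto simp: E_def)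
        then show "C1 * s powr p \<le> measure lebesgue {x. (x, T0 + s) \<in> E}" using elim s by simp
      qed
    qed
  qed
  define K1 where "K1 = C1 * C2 * exp (-1) * (1/2) powr (p + 1)"
  define K3 where "K3 = \<bar>M\<bar> * measure lebesgue E + 1"
  have K1: "K1 > 0" using C by (simp add: K1_def)
  have K3: "K3 > 0" unfolding K3_def using measure_nonneg[of lebesgue E] by (simp add: add_nonneg_pos)
  have ev: "\<forall>\<^sub>F \<tau> in at_top. \<tau> \<ge> max 1 (1 / \<delta>)" by (rule eventually_ge_at_top)
  have "\<forall>\<^sub>F \<tau> in at_top.
      K1 * exp (sqrt \<tau> * (-R)) * \<tau> powr (-(p + 1))
        \<le> exp (\<tau> * T0) * \<bar>LINT z | lebesgue_on E.
               \<rho> z * exp (sqrt \<tau> * (fst z \<bullet> \<omega>) - \<tau> * snd z)\<bar> \<and>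
      exp (\<tau> * T0) * \<bar>LINT z | lebesgue_on E.
               \<rho> z * exp (sqrt \<tau> * (fst z \<bullet> \<omega>) - \<tau> * snd z)\<bar>
        \<le> K3 * exp (sqrt \<tau> * R)"
    using ev
  proof eventually_elim
    case (elim \<tau>)
    then have tau: "\<tau> > 0" "1 / \<tau> \<le> \<delta>" using delta
      by (auto simp: divide_le_eq mult.commute)
    let ?I = "LINT z | lebesgue_on E. \<rho> z * exp (sqrt \<tau> * (fst z \<bullet> \<omega>) - \<tau> * snd z)"
    have up: "exp (\<tau> * T0) * \<bar>?I\<bar> \<le> M * measure lebesgue E * exp (sqrt \<tau> * R)"
      using tau by (intro integ_bound(2)[OF Em Eb rhoE bddE _ omega]) auto
    have "M * measure lebesgue E * exp (sqrt \<tau> * R) \<le> K3 * exp (sqrt \<tau> * R)"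
    proof -
      have "M * measure lebesgue E \<le> K3"
        unfolding K3_def using measure_nonneg[of lebesgue E]
        by (metis abs_ge_self add_increasing2 le_add_same_cancel1 mult_right_mono zero_le_one)
      then show ?thesis by (intro mult_right_mono) auto
    qed
    with up have upper: "exp (\<tau> * T0) * \<bar>?I\<bar> \<le> K3 * exp (sqrt \<tau> * R)" by linarith
    have lower: "K1 * exp (sqrt \<tau> * (-R)) * \<tau> powr (-(p + 1)) \<le> exp (\<tau> * T0) * \<bar>?I\<bar>"
      using sign
    proof
      assume pos: "AE z in lebesgue_on (D \<inter> (UNIV \<times> {T0..T0+\<delta>})). \<rho> z \<ge> C2"
      have "K1 * exp (sqrt \<tau> * (-R)) * \<tau> powr (-(p + 1)) \<le> exp (\<tau> * T0) * ?I"
        unfolding K1_def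
        by (rule lower_fixed[OF Em Eb rhoE bddE _ C p slE tau omega]) (unfold E_def, rule pos)
      also have "\<dots> \<le> exp (\<tau> * T0) * \<bar>?I\<bar>" by (intro mult_left_mono) auto
      finally show ?thesis .
    next
      assume neg: "AE z in lebesgue_on (D \<inter> (UNIV \<times> {T0..T0+\<delta>})). - \<rho> z \<ge> C2"
      have rhoE': "(\<lambda>z. - \<rho> z) \<in> borel_measurable (lebesgue_on E)" using rhoE by simp
      have bddE': "AE z in lebesgue_on E. \<bar>- \<rho> z\<bar> \<le> M" using bddE by simp
      have "K1 * exp (sqrt \<tau> * (-R)) * \<tau> powr (-(p + 1))
          \<le> exp (\<tau> * T0) * (LINT z | lebesgue_on E. - \<rho> z * exp (sqrt \<tau> * (fst z \<bullet> \<omega>) - \<tau> * snd z))"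
        unfolding K1_def
        by (rule lower_fixed[OF Em Eb rhoE' bddE' _ C p slE tau omega]) (unfold E_def, rule neg)
      also have "\<dots> = exp (\<tau> * T0) * (- ?I)" by simp
      also have "\<dots> \<le> exp (\<tau> * T0) * \<bar>?I\<bar>" by (intro mult_left_mono) auto
      finally show ?thesis .
    qed
    show ?case using lower upper by blast
  qed
  then have evf: "\<forall>\<^sub>F \<tau> in at_top.
      K1 * exp (sqrt \<tau> * (-R)) * \<tau> powr (-(p + 1))
        \<le> exp (\<tau> * T0) * \<bar>LINT z | lebesgue_on (D \<inter> (UNIV \<times> {T0..T0+\<delta>})).
               \<rho> z * exp (sqrt \<tau> * (fst z \<bullet> \<omega>) - \<tau> * snd z)\<bar> \<and>
      exp (\<tau> * T0) * \<bar>LINT z | lebesgue_on (D \<inter> (UNIV \<times> {T0..T0+\<delta>})).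
               \<rho> z * exp (sqrt \<tau> * (fst z \<bullet> \<omega>) - \<tau> * snd z)\<bar>
        \<le> K3 * exp (sqrt \<tau> * R)"
    unfolding E_def .
  show ?thesis
    by (rule exI[of _ K1], rule exI[of _ "-R"], rule exI[of _ K3], rule exI[of _ R])
       (rule conjI[OF K1 conjI[OF K3 evf]])
qed

end
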